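(* Consider the discrete setting described in the context, with a fixed constant $\rho_\infty^*>0$, and let $(f^n_{ij},g^n_{ij})_{n\ge0,\,i\in\mathcal I,\,j\in\mathcal J}$ be a solution of the linearized scheme: for all $n\ge0$, $i\in\mathcal I$, $j\in\mathcal J$, $$\frac{f^{n+1}_{ij}-f^n_{ij}}{\Delta t}+\frac{1}{\Delta x\,\Delta v}\big(\mathcal F^{n+1}_{i+\frac12,j}-\mathcal F^{n+1}_{i-\frac12,j}\big)=-\rho_\infty^*\chi_{1,j}\rho^{n+1}_{g,i}-(\rho_\infty^* )^{-1}f^{n+1}_{ij},$$ $$\frac{g^{n+1}_{ij}-g^n_{ij}}{\Delta t}+\frac{1}{\Delta x\,\Delta v}\big(\mathcal G^{n+1}_{i+\frac12,j}-\mathcal G^{n+1}_{i-\frac12,j}\big)=-(\rho_\infty^* )^{-1}\chi_{2,j}\rho^{n+1}_{f,i}-\rho_\infty^*\,g^{n+1}_{ij}.$$ Then, writing $F^n=(f^n_{ij},g^n_{ij})_{i,j}$, for all $n\ge0$, $$\frac12\left(\|F^{n+1}\|_\Delta^2-\|F^n\|_\Delta^2\right)+\Delta t\,C^*_{mc}\,\|(I-\Pi^\Delta)F^{n+1}\|_\Delta^2\le 0,\qquad C^*_{mc}=\min\big((\rho_\infty^* )^{-1},\rho_\infty^*\big).$$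
   Context: Space mesh: the torus $\mathbb T$ is divided into $N$ uniform cells of length $\Delta x$, indexed by $i\in\mathcal I=\mathbb Z/N\mathbb Z$ (periodic indexing). Velocity mesh: for $v^*>0$ and an integer $L\ge1$, $\Delta v=v^*/L$, the $2L$ velocity cells of length $\Delta v$ partitioning $[-v^*,v^*]$ are indexed by $j\in\mathcal J=\{-L+1,\dots,L\}$ with midpoints $v_j=(j-\tfrac12)\Delta v$ (so $v_{1-j}=-v_j$). Time step $\Delta t>0$, $t^n=n\Delta t$; $\lambda=\Delta x/(2\Delta t)$ is a fixed positive constant. Discrete velocity profiles: for $k=1,2$, $(\chi_{k,j})_{j\in\mathcal J}$ with $\chi_{k,j}>0$, $\chi_{k,j}=\chi_{k,1-j}$, $\sum_{j}\Delta v\,\chi_{k,j}=1$, and $0<\underline D_k\le D_k^\Delta:=\sum_j\Delta v\,v_j^2\chi_{k,j}\le\overline D_k$, $Q_k^\Delta:=\sum_j\Delta v\,v_j^4\chi_{k,j}\le\overline Q_k$ for given constants. Densities: $\rho_{f,i}=\sum_j\Delta v\,f_{ij}$, $\rho_{g,i}=\sum_j\Delta v\,g_{ij}$. Lax–Friedrichs fluxes: $\mathcal F^{n+1}_{i+\frac12,j}=\Delta v\frac{v_j}{2}(f^{n+1}_{i+1,j}+f^{n+1}_{ij})-\Delta v\,\lambda(f^{n+1}_{i+1,j}-f^{n+1}_{ij})$, and $\mathcal G$ the same with $g$ in place of $f$. Weighted scalar product for $F_k=(f_{k,ij},g_{k,ij})_{i,j}$: $\langle F_1,F_2\rangle_\Delta=\sum_{i,j}\Delta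 x\,\Delta v\big(\frac{f_{1,ij}f_{2,ij}}{\chi_{1,j}\rho_\infty^*}+\frac{g_{1,ij}g_{2,ij}\rho_\infty^*}{\chi_{2,j}}\big)$ with norm $\|\cdot\|_\Delta$. Projection: $(\Pi^\Delta F)_{ij}=\frac{\rho_{f,i}-\rho_{g,i}}{(\rho_\infty^* )^2+1}\big((\rho_\infty^* )^2\chi_{1,j},\,-\chi_{2,j}\big)$. *)

theory Defs
  imports Complex_Main
begin

text \<open>Space cells are indexed by i in {0..<N} with periodic neighbours (i+1) mod N and
(i+N-1) mod N; velocity cells by the integers j in {-L+1..L}.
Grid functions are real-valued functions of (i,j).\<close>

definition Jset :: "nat \<Rightarrow> int set" where
  "Jset L = {- int L + 1 .. int L}"

definition vmid :: "real \<Rightarrow> int \<Rightarrow> real" where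
  "vmid dv j = (real_of_int j - 1/2) * dv"

definition nxt :: "nat \<Rightarrow> nat \<Rightarrow> nat" where
  "nxt N i = (i + 1) mod N"

definition prv :: "nat \<Rightarrow> nat \<Rightarrow> nat" where
  "prv N i = (i + N - 1) mod N"

definition dens :: "nat \<Rightarrow> real \<Rightarrow> (nat \<Rightarrow> int \<Rightarrow> real) \<Rightarrow> nat \<Rightarrow> real" where
  "dens L dv f i = (\<Sum>j\<in>Jset L. dv * f i j)"

text \<open>Lax--Friedrichs flux at the interface i+1/2, with lambda = dx/(2 dt).\<close>
definition LFflux :: "nat \<Rightarrow> real \<Rightarrow> real \<Rightarrow> real \<Rightarrow> (nat \<Rightarrow> int \<Rightarrow> real) \<Rightarrow> nat \<Rightarrow> int \<Rightarrow> real" where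
  "LFflux N dx dt dv f i j =
     dv * (vmid dv j / 2) * (f (nxt N i) j + f i j) - dv * (dx / (2 * dt)) * (f (nxt N i) j - f i j)"

definition dinner :: "nat \<Rightarrow> nat \<Rightarrow> real \<Rightarrow> real \<Rightarrow> real \<Rightarrow> (int \<Rightarrow> real) \<Rightarrow> (int \<Rightarrow> real)
   \<Rightarrow> (nat \<Rightarrow> int \<Rightarrow> real) \<times> (nat \<Rightarrow> int \<Rightarrow> real)
   \<Rightarrow> (nat \<Rightarrow> int \<Rightarrow> real) \<times> (nat \<Rightarrow> int \<Rightarrow> real) \<Rightarrow> real" where
  "dinner N L dx dv r chi1 chi2 F1 F2 =
     (\<Sum>i\<in>{..<N}. \<Sum>j\<in>Jset L. dx * dv *
        (fst F1 i j * fst F2 i j / (chi1 j * r) + snd F1 i j * snd F2 i j * r / chi2 j))"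

definition dnorm :: "nat \<Rightarrow> nat \<Rightarrow> real \<Rightarrow> real \<Rightarrow> real \<Rightarrow> (int \<Rightarrow> real) \<Rightarrow> (int \<Rightarrow> real)
   \<Rightarrow> (nat \<Rightarrow> int \<Rightarrow> real) \<times> (nat \<Rightarrow> int \<Rightarrow> real) \<Rightarrow> real" where
  "dnorm N L dx dv r chi1 chi2 F = sqrt (dinner N L dx dv r chi1 chi2 F F)"

definition proj :: "nat \<Rightarrow> real \<Rightarrow> real \<Rightarrow> (int \<Rightarrow> real) \<Rightarrow> (int \<Rightarrow> real)
   \<Rightarrow> (nat \<Rightarrow> int \<Rightarrow> real) \<times> (nat \<Rightarrow> int \<Rightarrow> real)
   \<Rightarrow> (nat \<Rightarrow> int \<Rightarrow> real) \<times> (nat \<Rightarrow> int \<Rightarrow> real)" where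
  "proj L dv r chi1 chi2 F =
     (let c = (\<lambda>i. (dens L dv (fst F) i - dens L dv (snd F) i) / (r\<^sup>2 + 1))
      in (\<lambda>i j. c i * r\<^sup>2 * chi1 j, \<lambda>i j. - c i * chi2 j))"

definition projc :: "nat \<Rightarrow> real \<Rightarrow> real \<Rightarrow> (int \<Rightarrow> real) \<Rightarrow> (int \<Rightarrow> real)
   \<Rightarrow> (nat \<Rightarrow> int \<Rightarrow> real) \<times> (nat \<Rightarrow> int \<Rightarrow> real)
   \<Rightarrow> (nat \<Rightarrow> int \<Rightarrow> real) \<times> (nat \<Rightarrow> int \<Rightarrow> real)" where
  "projc L dv r chi1 chi2 F =
     (\<lambda>i j. fst F i j - fst (proj L dv r chi1 chi2 F) i j,
      \<lambda>i j. snd F i j - snd (proj L dv r chi1 chi2 F) i j)"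

end

theory Submission
  imports Defs
begin

lemma nxt_prv:
  assumes "N \<ge> 1" "i < N"
  shows "prv N (nxt N i) = i" "nxt N (prv N i) = i" "nxt N i < N" "prv N i < N"
proof -
  show "nxt N i < N" "prv N i < N" using assms by (auto simp: nxt_def prv_def)
  show "prv N (nxt N i) = i"
  proof (cases "i + 1 < N")
    case True then show ?thesis using assms by (simp add: nxt_def prv_def)
  next
    case False then have "i + 1 = N" using assms by simp
    then show ?thesis using assms by (simp add: nxt_def prv_def)
  qed
  show "nxt N (prv N i) = i"
  proof (cases "i = 0")
    case True then show ?thesis using assms by (simp add: nxt_def prv_def)
  next
    case False then have "(i + N - 1) mod N = i - 1"
      using assms by (metis add.commute add_diff_assoc less_imp_diff_less mod_add_self2 mod_less not_gr0 Suc_le_eq One_nat_def le_add1 le_add_diff_inverse2)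
    then show ?thesis using assms False by (simp add: nxt_def prv_def)
  qed
qed

lemma bij_nxt: "N \<ge> 1 \<Longrightarrow> bij_betw (nxt N) {..<N} {..<N}"
  by (rule bij_betw_byWitness[where f'="prv N"]) (auto simp: nxt_prv)

lemma flux_sum:
  assumes N: "N \<ge> 1" and dv: "dv > 0" and dx: "dx > 0" and dt: "dt > 0"
  shows "0 \<le> (\<Sum>i<N. (LFflux N dx dt dv h i j - LFflux N dx dt dv h (prv N i) j) * h i j)"
proof -
  define \<phi> where "\<phi> i = LFflux N dx dt dv h i j" for i
  have re: "(\<Sum>i<N. \<phi> (prv N i) * h i j) = (\<Sum>i<N. \<phi> i * h (nxt N i) j)"
    using sum.reindex_bij_betw[OF bij_nxt[OF N], of "\<lambda>i. \<phi> (prv N i) * h i j"]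
    by (simp add: nxt_prv[OF N])
  have re2: "(\<Sum>i<N. (h (nxt N i) j)\<^sup>2) = (\<Sum>i<N. (h i j)\<^sup>2)"
    using sum.reindex_bij_betw[OF bij_nxt[OF N], of "\<lambda>i. (h i j)\<^sup>2"] by simp
  define v where "v = vmid dv j"
  define lam where "lam = dx / (2 * dt)"
  have lam: "lam > 0" using dx dt by (simp add: lam_def)
  have pt: "\<phi> i * (h i j - h (nxt N i) j) = dv * v / 2 * ((h i j)\<^sup>2 - (h (nxt N i) j)\<^sup>2)
        + dv * lam * (h (nxt N i) j - h i j)\<^sup>2" for i
    using dt unfolding \<phi>_def LFflux_def v_def lam_def by (simp add: power2_eq_square field_simps)
  have "(\<Sum>i<N. (\<phi> i - \<phi> (prv N i)) * h i j) = (\<Sum>i<N. \<phi> i * h i j) - (\<Sum>i<N. \<phi> (prv N i) * h i j)"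
    by (simp add: left_diff_distrib sum_subtractf)
  also have "\<dots> = (\<Sum>i<N. \<phi> i * (h i j - h (nxt N i) j))"
    by (simp add: re right_diff_distrib sum_subtractf)
  also have "\<dots> = dv * v / 2 * ((\<Sum>i<N. (h i j)\<^sup>2) - (\<Sum>i<N. (h (nxt N i) j)\<^sup>2))
        + dv * lam * (\<Sum>i<N. (h (nxt N i) j - h i j)\<^sup>2)"
  proof -
    have "(\<Sum>i<N. \<phi> i * (h i j - h (nxt N i) j)) = (\<Sum>i<N. dv * v / 2 * ((h i j)\<^sup>2 - (h (nxt N i) j)\<^sup>2)
        + dv * lam * (h (nxt N i) j - h i j)\<^sup>2)" by (rule sum.cong) (simp_all only: pt)
    also have "\<dots> = dv * v / 2 * (\<Sum>i<N. (h i j)\<^sup>2 - (h (nxt N i) j)\<^sup>2) + dv * lam * (\<Sum>i<N. (h (nxt N i) j - h i j)\<^sup>2)"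
      by (simp only: sum.distrib sum_distrib_left)
    finally show ?thesis by (simp only: sum_subtractf)
  qed
  also have "\<dots> = dv * lam * (\<Sum>i<N. (h (nxt N i) j - h i j)\<^sup>2)" by (simp add: re2)
  also have "\<dots> \<ge> 0" using dv lam by (intro mult_nonneg_nonneg sum_nonneg) auto
  finally show ?thesis by (simp add: \<phi>_def)
qed

lemma cs:
  fixes J :: "int set" and f \<chi> :: "int \<Rightarrow> real"
  assumes "finite J" "\<forall>j\<in>J. \<chi> j > 0" "dv > 0" "(\<Sum>j\<in>J. dv * \<chi> j) = 1"
  shows "(\<Sum>j\<in>J. dv * f j)\<^sup>2 \<le> (\<Sum>j\<in>J. dv * (f j)\<^sup>2 / \<chi> j)"
proof -
  define a where "a = (\<Sum>j\<in>J. dv * f j)"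
  have "0 \<le> (\<Sum>j\<in>J. dv * (f j - a * \<chi> j)\<^sup>2 / \<chi> j)"
    using assms by (intro sum_nonneg) auto
  also have "\<dots> = (\<Sum>j\<in>J. dv * (f j)\<^sup>2 / \<chi> j - 2 * a * (dv * f j) + a\<^sup>2 * (dv * \<chi> j))"
    using assms(2) by (intro sum.cong refl) (auto simp: field_simps power2_eq_square)
  also have "\<dots> = (\<Sum>j\<in>J. dv * (f j)\<^sup>2 / \<chi> j) - a\<^sup>2"
    using assms(4) by (simp add: sum.distrib sum_subtractf sum_distrib_left[symmetric] a_def power2_eq_square)
  finally show ?thesis by (simp add: a_def)
qed

lemma ident:
  fixes a b c r m S1 S2 :: real
  assumes r: "r > 0" and c: "c = (a - b) / (r\<^sup>2 + 1)"
  shows "S1 / r\<^sup>2 + r\<^sup>2 * S2 + 2 * a * b - m * (S1 / r - 2 * c * r * a + c\<^sup>2 * r^3 + r * S2 + 2 * c * r * b + c\<^sup>2 * r)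
     = (1/r\<^sup>2 - m/r) * (S1 - a\<^sup>2) + (r\<^sup>2 - m*r) * (S2 - b\<^sup>2) + (a + b*r\<^sup>2)\<^sup>2 * (1/r\<^sup>2 - m/(r*(r\<^sup>2+1)))"
proof -
  have q: "r\<^sup>2 + 1 > 0" using zero_le_power2[of r] by linarith
  define u where "u = 1 / r"
  define w where "w = 1 / (r\<^sup>2 + 1)"
  have u: "u * r = 1" using r by (simp add: u_def)
  have w: "w * (r\<^sup>2 + 1) = 1" using q by (simp add: w_def)
  have cw: "c = (a - b) * w" using c by (simp add: w_def)
  have e1: "1 / r\<^sup>2 = u^2" "S1 / r\<^sup>2 = S1 * u^2" "S1 / r = S1 * u" "m / r = m * u"
     "m / (r * (r\<^sup>2+1)) = m * u * w"
    by (simp_all add: u_def w_def power2_eq_square)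
  show ?thesis unfolding e1 cw using u w by algebra
qed

lemma dissip:
  fixes J :: "int set" and f g \<chi>1 \<chi>2 :: "int \<Rightarrow> real"
  assumes J: "finite J" and c1: "\<forall>j\<in>J. \<chi>1 j > 0" and c2: "\<forall>j\<in>J. \<chi>2 j > 0"
    and dv: "dv > 0" and r: "r > 0"
    and m1: "(\<Sum>j\<in>J. dv * \<chi>1 j) = 1" and m2: "(\<Sum>j\<in>J. dv * \<chi>2 j) = 1"
    and a: "a = (\<Sum>j\<in>J. dv * f j)" and b: "b = (\<Sum>j\<in>J. dv * g j)"
    and c: "c = (a - b) / (r\<^sup>2 + 1)"
  shows "min (1/r) r * (\<Sum>j\<in>J. dv * ((f j - c * r\<^sup>2 * \<chi>1 j) * (f j - c * r\<^sup>2 * \<chi>1 j) / (\<chi>1 j * r)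
            + (g j + c * \<chi>2 j) * (g j + c * \<chi>2 j) * r / \<chi>2 j))
        \<le> (\<Sum>j\<in>J. dv * (f j)\<^sup>2 / \<chi>1 j) / r\<^sup>2 + r\<^sup>2 * (\<Sum>j\<in>J. dv * (g j)\<^sup>2 / \<chi>2 j) + 2 * a * b"
proof -
  define S1 where "S1 = (\<Sum>j\<in>J. dv * (f j)\<^sup>2 / \<chi>1 j)"
  define S2 where "S2 = (\<Sum>j\<in>J. dv * (g j)\<^sup>2 / \<chi>2 j)"
  define m where "m = min (1/r) r"
  have cs1: "a\<^sup>2 \<le> S1" unfolding a S1_def by (rule cs[OF J c1 dv m1])
  have cs2: "b\<^sup>2 \<le> S2" unfolding b S2_def by (rule cs[OF J c2 dv m2])
  have "(\<Sum>j\<in>J. dv * ((f j - c * r\<^sup>2 * \<chi>1 j) * (f j - c * r\<^sup>2 * \<chi>1 j) / (\<chi>1 j * r)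
            + (g j + c * \<chi>2 j) * (g j + c * \<chi>2 j) * r / \<chi>2 j))
     = (\<Sum>j\<in>J. (dv * (f j)\<^sup>2 / \<chi>1 j) / r - (2 * c * r) * (dv * f j) + (c\<^sup>2 * r^3) * (dv * \<chi>1 j)
          + r * (dv * (g j)\<^sup>2 / \<chi>2 j) + (2 * c * r) * (dv * g j) + (c\<^sup>2 * r) * (dv * \<chi>2 j))"
  proof (intro sum.cong refl)
    fix x assume "x \<in> J"
    then have "\<chi>1 x \<noteq> 0" "\<chi>2 x \<noteq> 0" using c1 c2 by auto
    then show "dv * ((f x - c * r\<^sup>2 * \<chi>1 x) * (f x - c * r\<^sup>2 * \<chi>1 x) / (\<chi>1 x * r)
            + (g x + c * \<chi>2 x) * (g x + c * \<chi>2 x) * r / \<chi>2 x) = (dv * (f x)\<^sup>2 / \<chi>1 x) / r - (2 * c * r) * (dv * f x) + (c\<^sup>2 * r^3) * (dv * \<chi>1 x)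
          + r * (dv * (g x)\<^sup>2 / \<chi>2 x) + (2 * c * r) * (dv * g x) + (c\<^sup>2 * r) * (dv * \<chi>2 x)"
      using r by (simp add: field_simps power2_eq_square power3_eq_cube)
  qed
  also have "\<dots> = S1 / r - 2 * c * r * a + c\<^sup>2 * r^3 + r * S2 + 2 * c * r * b + c\<^sup>2 * r"
    by (simp only: sum.distrib sum_subtractf sum_distrib_left[symmetric] sum_divide_distrib[symmetric]
        a b S1_def S2_def)
       (simp add: m1[unfolded sum_distrib_left[symmetric]] m2[unfolded sum_distrib_left[symmetric]])
  finally have N: "(\<Sum>j\<in>J. dv * ((f j - c * r\<^sup>2 * \<chi>1 j) * (f j - c * r\<^sup>2 * \<chi>1 j) / (\<chi>1 j * r)
            + (g j + c * \<chi>2 j) * (g j + c * \<chi>2 j) * r / \<chi>2 j))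
       = S1 / r - 2 * c * r * a + c\<^sup>2 * r^3 + r * S2 + 2 * c * r * b + c\<^sup>2 * r" .
  have id: "S1 / r\<^sup>2 + r\<^sup>2 * S2 + 2 * a * b - m * (S1 / r - 2 * c * r * a + c\<^sup>2 * r^3 + r * S2 + 2 * c * r * b + c\<^sup>2 * r)
     = (1/r\<^sup>2 - m/r) * (S1 - a\<^sup>2) + (r\<^sup>2 - m*r) * (S2 - b\<^sup>2) + (a + b*r\<^sup>2)\<^sup>2 * (1/r\<^sup>2 - m/(r*(r\<^sup>2+1)))"
    by (rule ident[OF r c])
  have k1: "1/r\<^sup>2 - m/r \<ge> 0" and k2: "r\<^sup>2 - m*r \<ge> 0" and k3: "1/r\<^sup>2 - m/(r*(r\<^sup>2+1)) \<ge> 0"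
  proof -
    have mr: "m \<le> 1/r" "m \<le> r" "m > 0" using r by (auto simp: m_def)
    have "m * r \<le> 1" using mr(1) r by (simp add: field_simps)
    then have "m * r \<le> 1" .
    have e: "1/r\<^sup>2 - m/r = (1 - m*r) / r\<^sup>2" using r by (simp add: field_simps power2_eq_square)
    show "1/r\<^sup>2 - m/r \<ge> 0" unfolding e using \<open>m * r \<le> 1\<close> by simp
    have "m * r \<le> r * r" using mr r by (simp add: mult_right_mono)
    then show "r\<^sup>2 - m*r \<ge> 0" by (simp add: power2_eq_square)
    have "r \<le> r * (r\<^sup>2 + 1)" using r by (simp add: algebra_simps)
    moreover have "0 < r * (r\<^sup>2 + 1) * r" using r by (simp add: add_pos_pos)
    ultimately have "m/(r*(r\<^sup>2+1)) \<le> m / r" using mr(3) by (intro divide_left_mono) auto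
    then show "1/r\<^sup>2 - m/(r*(r\<^sup>2+1)) \<ge> 0" using \<open>1/r\<^sup>2 - m/r \<ge> 0\<close> by linarith
  qed
  have "0 \<le> (1/r\<^sup>2 - m/r) * (S1 - a\<^sup>2) + (r\<^sup>2 - m*r) * (S2 - b\<^sup>2) + (a + b*r\<^sup>2)\<^sup>2 * (1/r\<^sup>2 - m/(r*(r\<^sup>2+1)))"
    using k1 k2 k3 cs1 cs2 by (intro add_nonneg_nonneg mult_nonneg_nonneg) auto
  then have "m * (S1 / r - 2 * c * r * a + c\<^sup>2 * r^3 + r * S2 + 2 * c * r * b + c\<^sup>2 * r)
      \<le> S1 / r\<^sup>2 + r\<^sup>2 * S2 + 2 * a * b" using id by linarith
  then show ?thesis unfolding N m_def[symmetric] S1_def[symmetric] S2_def[symmetric] .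
qed

lemma lin4:
  fixes u v w z y :: "'a \<Rightarrow> real"
  shows "(\<Sum>j\<in>J. k1 * u j + k2 * v j + k3 * w j + k4 * z j - y j)
     = k1 * sum u J + k2 * sum v J + k3 * sum w J + k4 * sum z J - sum y J"
  by (simp add: sum.distrib sum_subtractf sum_distrib_left)

lemma comb:
  fixes x1 x0 y1 y0 R1 R2 Z1 Z2 s1 s2 s3 s4 :: real
  assumes "(1/2)*x1 - (1/2)*x0 \<le> R1 - Z1" "(1/2)*y1 - (1/2)*y0 \<le> R2 - Z2" "R1 = s1+s2" "R2 = s3+s4"
  shows "(1/2)*(x1+y1) - (1/2)*(x0+y0) \<le> s1+s2+s3+s4 - (Z1+Z2)"
proof -
  have "(1/2)*(x1+y1) = (1/2)*x1 + (1/2)*y1" "(1/2)*(x0+y0) = (1/2)*x0 + (1/2)*y0"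
    by (simp_all only: distrib_left)
  then show ?thesis using assms by linarith
qed

lemma step:
  fixes x0 x1 w dt dx dv D R :: real
  assumes dt: "dt > 0" and dxdv: "dx * dv > 0" and w: "w \<ge> 0"
    and eq: "(x1 - x0) / dt + D / (dx * dv) = R"
  shows "(1/2) * (dx * dv * (x1 * x1 * w)) - (1/2) * (dx * dv * (x0 * x0 * w))
      \<le> dt * dx * dv * (R * x1 * w) - dt * w * (D * x1)"
proof -
  have x: "x1 - x0 = dt * R - dt * D / (dx * dv)" using eq dt dxdv
    by (simp add: field_simps)
  have "dt * dx * dv * (R * x1 * w) - dt * w * (D * x1) = dx * dv * w * x1 * (dt * R - dt * D / (dx * dv))"
  proof -
    have "dx \<noteq> 0" "dv \<noteq> 0" using dxdv by auto
    then show ?thesis by (simp add: field_simps)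
  qed
  also have "\<dots> = dx * dv * w * x1 * (x1 - x0)" by (simp add: x)
  finally have e: "dt * dx * dv * (R * x1 * w) - dt * w * (D * x1) = dx * dv * w * x1 * (x1 - x0)" .
  have "0 \<le> (1/2) * (dx * dv * w) * (x1 - x0)\<^sup>2" using dxdv w by simp
  moreover have "(1/2) * (dx * dv * w) * (x1 - x0)\<^sup>2 = dx * dv * w * x1 * (x1 - x0)
     - ((1/2) * (dx * dv * (x1 * x1 * w)) - (1/2) * (dx * dv * (x0 * x0 * w)))"
    by (simp add: power2_eq_square algebra_simps)
  ultimately show ?thesis using e by linarith
qed

theorem lemma4p1:
  fixes N L :: nat and dx dt vstar r :: real
    and chi1 chi2 :: "int \<Rightarrow> real"
    and D1lo D1hi Q1hi D2lo D2hi Q2hi :: real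
    and f g :: "nat \<Rightarrow> nat \<Rightarrow> int \<Rightarrow> real"
  defines "dv \<equiv> vstar / real L"
  assumes N: "N \<ge> 1" and L: "L \<ge> 1"
    and dx: "dx > 0" and dt: "dt > 0" and vstar: "vstar > 0" and r: "r > 0"
    and chi1_pos: "\<forall>j\<in>Jset L. chi1 j > 0"
    and chi2_pos: "\<forall>j\<in>Jset L. chi2 j > 0"
    and chi1_sym: "\<forall>j\<in>Jset L. chi1 j = chi1 (1 - j)"
    and chi2_sym: "\<forall>j\<in>Jset L. chi2 j = chi2 (1 - j)"
    and chi1_mass: "(\<Sum>j\<in>Jset L. dv * chi1 j) = 1"
    and chi2_mass: "(\<Sum>j\<in>Jset L. dv * chi2 j) = 1"
    and D1: "0 < D1lo" "D1lo \<le> (\<Sum>j\<in>Jset L. dv * (vmid dv j)\<^sup>2 * chi1 j)"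
            "(\<Sum>j\<in>Jset L. dv * (vmid dv j)\<^sup>2 * chi1 j) \<le> D1hi"
    and Q1: "(\<Sum>j\<in>Jset L. dv * (vmid dv j)^4 * chi1 j) \<le> Q1hi"
    and D2: "0 < D2lo" "D2lo \<le> (\<Sum>j\<in>Jset L. dv * (vmid dv j)\<^sup>2 * chi2 j)"
            "(\<Sum>j\<in>Jset L. dv * (vmid dv j)\<^sup>2 * chi2 j) \<le> D2hi"
    and Q2: "(\<Sum>j\<in>Jset L. dv * (vmid dv j)^4 * chi2 j) \<le> Q2hi"
    and scheme_f: "\<forall>n i j. i < N \<longrightarrow> j \<in> Jset L \<longrightarrow>
        (f (Suc n) i j - f n i j) / dt
        + (LFflux N dx dt dv (f (Suc n)) i j - LFflux N dx dt dv (f (Suc n)) (prv N i) j) / (dx * dv)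
        = - r * chi1 j * dens L dv (g (Suc n)) i - (1 / r) * f (Suc n) i j"
    and scheme_g: "\<forall>n i j. i < N \<longrightarrow> j \<in> Jset L \<longrightarrow>
        (g (Suc n) i j - g n i j) / dt
        + (LFflux N dx dt dv (g (Suc n)) i j - LFflux N dx dt dv (g (Suc n)) (prv N i) j) / (dx * dv)
        = - (1 / r) * chi2 j * dens L dv (f (Suc n)) i - r * g (Suc n) i j"
  shows "\<forall>n. (1/2) * ((dnorm N L dx dv r chi1 chi2 (f (Suc n), g (Suc n)))\<^sup>2
                     - (dnorm N L dx dv r chi1 chi2 (f n, g n))\<^sup>2)
            + dt * min (1 / r) r
              * (dnorm N L dx dv r chi1 chi2 (projc L dv r chi1 chi2 (f (Suc n), g (Suc n))))\<^sup>2
            \<le> 0"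
proof (intro allI)
  fix n
  have J: "finite (Jset L)" by (simp add: Jset_def)
  have dv: "dv > 0" using vstar L by (simp add: dv_def)
  have dxdv: "dx * dv > 0" using dx dv by simp
  define F1 where "F1 = f (Suc n)"
  define F0 where "F0 = f n"
  define G1 where "G1 = g (Suc n)"
  define G0 where "G0 = g n"
  define m where "m = min (1/r) r"
  define a where "a i = dens L dv F1 i" for i
  define b where "b i = dens L dv G1 i" for i
  define c where "c i = (a i - b i) / (r\<^sup>2 + 1)" for i
  define p where "p i j = F1 i j - c i * r\<^sup>2 * chi1 j" for i j
  define q where "q i j = G1 i j + c i * chi2 j" for i j
  define S1 where "S1 i = (\<Sum>j\<in>Jset L. dv * (F1 i j)\<^sup>2 / chi1 j)" for i
  define S2 where "S2 i = (\<Sum>j\<in>Jset L. dv * (G1 i j)\<^sup>2 / chi2 j)" for i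
  have pq: "projc L dv r chi1 chi2 (F1, G1) = (p, q)"
    by (simp add: projc_def proj_def Let_def p_def q_def c_def a_def b_def fun_eq_iff)
  have dinner_nn: "0 \<le> dinner N L dx dv r chi1 chi2 X X" for X
    unfolding dinner_def
  proof (intro sum_nonneg)
    fix i j assume "j \<in> Jset L"
    then have "chi1 j > 0" "chi2 j > 0" using chi1_pos chi2_pos by auto
    then show "0 \<le> dx * dv * (fst X i j * fst X i j / (chi1 j * r) + snd X i j * snd X i j * r / chi2 j)"
    proof -
      have "0 \<le> fst X i j * fst X i j / (chi1 j * r)"
        using \<open>chi1 j > 0\<close> r by (intro divide_nonneg_pos) auto
      moreover have "0 \<le> snd X i j * snd X i j * r / chi2 j"
        using \<open>chi2 j > 0\<close> r by (intro divide_nonneg_pos) (auto intro: mult_nonneg_nonneg[OF zero_le_square])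
      ultimately show ?thesis using dx dv by simp
    qed
  qed
  have sq: "(dnorm N L dx dv r chi1 chi2 X)\<^sup>2 = dinner N L dx dv r chi1 chi2 X X" for X
    unfolding dnorm_def using dinner_nn[of X] by simp
  define A1 where "A1 i j = dx * dv * (F1 i j * F1 i j / (chi1 j * r) + G1 i j * G1 i j * r / chi2 j)" for i j
  define A0 where "A0 i j = dx * dv * (F0 i j * F0 i j / (chi1 j * r) + G0 i j * G0 i j * r / chi2 j)" for i j
  define P where "P i j = dx * dv * (p i j * p i j / (chi1 j * r) + q i j * q i j * r / chi2 j)" for i j
  define Z where "Z i j = dt / (chi1 j * r) * ((LFflux N dx dt dv F1 i j - LFflux N dx dt dv F1 (prv N i) j) * F1 i j)
     + dt * r / chi2 j * ((LFflux N dx dt dv G1 i j - LFflux N dx dt dv G1 (prv N i) j) * G1 i j)" for i j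
  have E1: "dinner N L dx dv r chi1 chi2 (F1, G1) (F1, G1) = (\<Sum>i<N. \<Sum>j\<in>Jset L. A1 i j)"
    by (simp add: dinner_def A1_def)
  have E0: "dinner N L dx dv r chi1 chi2 (F0, G0) (F0, G0) = (\<Sum>i<N. \<Sum>j\<in>Jset L. A0 i j)"
    by (simp add: dinner_def A0_def)
  have EP: "dinner N L dx dv r chi1 chi2 (p, q) (p, q) = (\<Sum>i<N. \<Sum>j\<in>Jset L. P i j)"
    by (simp add: dinner_def P_def)
  have pj: "(1/2) * A1 i j - (1/2) * A0 i j \<le> (-(dt*dx*b i)) * (dv * F1 i j) + (-(dt*dx/r\<^sup>2)) * (dv * (F1 i j)\<^sup>2 / chi1 j)
      + (-(dt*dx*a i)) * (dv * G1 i j) + (-(dt*dx*r\<^sup>2)) * (dv * (G1 i j)\<^sup>2 / chi2 j) - Z i j"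
    if i: "i < N" and j: "j \<in> Jset L" for i j
  proof -
    have c1: "chi1 j > 0" and c2: "chi2 j > 0" using chi1_pos chi2_pos j by auto
    have sf: "(F1 i j - F0 i j) / dt + (LFflux N dx dt dv F1 i j - LFflux N dx dt dv F1 (prv N i) j) / (dx * dv)
        = - r * chi1 j * b i - (1 / r) * F1 i j"
      using scheme_f i j by (simp add: F1_def F0_def b_def G1_def)
    have sg: "(G1 i j - G0 i j) / dt + (LFflux N dx dt dv G1 i j - LFflux N dx dt dv G1 (prv N i) j) / (dx * dv)
        = - (1 / r) * chi2 j * a i - r * G1 i j"
      using scheme_g i j by (simp add: G1_def G0_def a_def F1_def)
    have w1: "1 / (chi1 j * r) \<ge> 0" and w2: "r / chi2 j \<ge> 0" using c1 c2 r by auto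
    note st1 = step[OF dt dxdv w1 sf]
    note st2 = step[OF dt dxdv w2 sg]
    have rn: "r \<noteq> 0" using r by simp
    have eA1: "A1 i j = dx * dv * (F1 i j * F1 i j * (1 / (chi1 j * r))) + dx * dv * (G1 i j * G1 i j * (r / chi2 j))"
      by (simp add: A1_def algebra_simps)
    have eA0: "A0 i j = dx * dv * (F0 i j * F0 i j * (1 / (chi1 j * r))) + dx * dv * (G0 i j * G0 i j * (r / chi2 j))"
      by (simp add: A0_def algebra_simps)
    have r1: "dt * dx * dv * ((- r * chi1 j * b i - (1 / r) * F1 i j) * F1 i j * (1 / (chi1 j * r)))
        = (-(dt*dx*b i)) * (dv * F1 i j) + (-(dt*dx/r\<^sup>2)) * (dv * (F1 i j)\<^sup>2 / chi1 j)"
      using c1 rn by (simp add: field_simps power2_eq_square)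
    have r2: "dt * dx * dv * ((- (1 / r) * chi2 j * a i - r * G1 i j) * G1 i j * (r / chi2 j))
        = (-(dt*dx*a i)) * (dv * G1 i j) + (-(dt*dx*r\<^sup>2)) * (dv * (G1 i j)\<^sup>2 / chi2 j)"
      using c2 rn by (simp add: field_simps power2_eq_square)
    have eZ: "Z i j = dt * (1 / (chi1 j * r)) * ((LFflux N dx dt dv F1 i j - LFflux N dx dt dv F1 (prv N i) j) * F1 i j)
       + dt * (r / chi2 j) * ((LFflux N dx dt dv G1 i j - LFflux N dx dt dv G1 (prv N i) j) * G1 i j)"
      by (simp add: Z_def)
    show ?thesis unfolding eA1 eA0 eZ by (rule comb[OF st1 st2 r1 r2])
  qed
  have pi: "(1/2) * (\<Sum>j\<in>Jset L. A1 i j) - (1/2) * (\<Sum>j\<in>Jset L. A0 i j) + dt * m * (\<Sum>j\<in>Jset L. P i j)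
      \<le> - (\<Sum>j\<in>Jset L. Z i j)" if i: "i < N" for i
  proof -
    have "(1/2) * (\<Sum>j\<in>Jset L. A1 i j) - (1/2) * (\<Sum>j\<in>Jset L. A0 i j)
        = (\<Sum>j\<in>Jset L. (1/2) * A1 i j - (1/2) * A0 i j)"
      by (simp add: sum_subtractf sum_distrib_left)
    also have "\<dots> \<le> (\<Sum>j\<in>Jset L. (-(dt*dx*b i)) * (dv * F1 i j) + (-(dt*dx/r\<^sup>2)) * (dv * (F1 i j)\<^sup>2 / chi1 j)
      + (-(dt*dx*a i)) * (dv * G1 i j) + (-(dt*dx*r\<^sup>2)) * (dv * (G1 i j)\<^sup>2 / chi2 j) - Z i j)"
      by (rule sum_mono) (rule pj[OF i])
    also have "\<dots> = (-(dt*dx*b i)) * a i + (-(dt*dx/r\<^sup>2)) * S1 i + (-(dt*dx*a i)) * b i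
        + (-(dt*dx*r\<^sup>2)) * S2 i - (\<Sum>j\<in>Jset L. Z i j)"
      unfolding lin4 by (simp add: a_def b_def dens_def S1_def S2_def)
    also have "\<dots> = -(dt*dx*(S1 i / r\<^sup>2 + r\<^sup>2 * S2 i + 2 * a i * b i)) - (\<Sum>j\<in>Jset L. Z i j)"
      by (simp add: algebra_simps)
    finally have l1: "(1/2) * (\<Sum>j\<in>Jset L. A1 i j) - (1/2) * (\<Sum>j\<in>Jset L. A0 i j)
       \<le> -(dt*dx*(S1 i / r\<^sup>2 + r\<^sup>2 * S2 i + 2 * a i * b i)) - (\<Sum>j\<in>Jset L. Z i j)" .
    have diss: "m * (\<Sum>j\<in>Jset L. dv * (p i j * p i j / (chi1 j * r) + q i j * q i j * r / chi2 j))
       \<le> S1 i / r\<^sup>2 + r\<^sup>2 * S2 i + 2 * a i * b i"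
      unfolding p_def q_def m_def S1_def S2_def
      by (rule dissip[OF J chi1_pos chi2_pos dv r chi1_mass chi2_mass])
         (simp_all add: a_def b_def dens_def c_def)
    have eP: "dt * m * (\<Sum>j\<in>Jset L. P i j)
       = (dt * dx) * (m * (\<Sum>j\<in>Jset L. dv * (p i j * p i j / (chi1 j * r) + q i j * q i j * r / chi2 j)))"
      by (simp add: P_def sum_distrib_left algebra_simps)
    have "dt * dx \<ge> 0" using dt dx by simp
    from mult_left_mono[OF diss this]
    have "dt * m * (\<Sum>j\<in>Jset L. P i j) \<le> dt*dx*(S1 i / r\<^sup>2 + r\<^sup>2 * S2 i + 2 * a i * b i)"
      unfolding eP .
    then show ?thesis using l1 by linarith
  qed
  have Znn: "0 \<le> (\<Sum>i<N. Z i j)" if j: "j \<in> Jset L" for j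
  proof -
    have c1: "chi1 j > 0" and c2: "chi2 j > 0" using chi1_pos chi2_pos j by auto
    have "(\<Sum>i<N. Z i j) = dt / (chi1 j * r) * (\<Sum>i<N. (LFflux N dx dt dv F1 i j - LFflux N dx dt dv F1 (prv N i) j) * F1 i j)
       + dt * r / chi2 j * (\<Sum>i<N. (LFflux N dx dt dv G1 i j - LFflux N dx dt dv G1 (prv N i) j) * G1 i j)"
      by (simp only: Z_def sum.distrib sum_distrib_left)
    also have "\<dots> \<ge> 0"
      using flux_sum[OF N dv dx dt, of F1 j] flux_sum[OF N dv dx dt, of G1 j] c1 c2 dt r
      by (intro add_nonneg_nonneg mult_nonneg_nonneg) auto
    finally show ?thesis .
  qed
  have main: "(1/2) * ((\<Sum>i<N. \<Sum>j\<in>Jset L. A1 i j) - (\<Sum>i<N. \<Sum>j\<in>Jset L. A0 i j))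
      + dt * m * (\<Sum>i<N. \<Sum>j\<in>Jset L. P i j) \<le> 0"
  proof -
    have "(1/2) * ((\<Sum>i<N. \<Sum>j\<in>Jset L. A1 i j) - (\<Sum>i<N. \<Sum>j\<in>Jset L. A0 i j))
      + dt * m * (\<Sum>i<N. \<Sum>j\<in>Jset L. P i j)
      = (\<Sum>i<N. (1/2) * (\<Sum>j\<in>Jset L. A1 i j) - (1/2) * (\<Sum>j\<in>Jset L. A0 i j) + dt * m * (\<Sum>j\<in>Jset L. P i j))"
      by (simp add: sum.distrib sum_subtractf sum_distrib_left right_diff_distrib)
    also have "\<dots> \<le> (\<Sum>i<N. - (\<Sum>j\<in>Jset L. Z i j))"
      by (rule sum_mono) (rule pi, simp)
    also have "\<dots> = - (\<Sum>j\<in>Jset L. \<Sum>i<N. Z i j)"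
      by (simp add: sum_negf sum.swap[of _ "{..<N}"])
    also have "\<dots> \<le> 0" using Znn by (simp add: sum_nonneg)
    finally show ?thesis .
  qed
  have "(1/2) * ((dnorm N L dx dv r chi1 chi2 (F1, G1))\<^sup>2 - (dnorm N L dx dv r chi1 chi2 (F0, G0))\<^sup>2)
      + dt * m * (dnorm N L dx dv r chi1 chi2 (projc L dv r chi1 chi2 (F1, G1)))\<^sup>2 \<le> 0"
    unfolding sq pq E1 E0 EP using main .
  then show "(1/2) * ((dnorm N L dx dv r chi1 chi2 (f (Suc n), g (Suc n)))\<^sup>2
                     - (dnorm N L dx dv r chi1 chi2 (f n, g n))\<^sup>2)
            + dt * min (1 / r) r
              * (dnorm N L dx dv r chi1 chi2 (projc L dv r chi1 chi2 (f (Suc n), g (Suc n))))\<^sup>2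
            \<le> 0"
    by (simp add: F1_def F0_def G1_def G0_def m_def)
qed

end
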